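(* Let $m\geq 2$ and $n\geq 2$ be integers, let $G_m$ be a graph of order $m$ and $K_n$ the complete graph of order $n$. Then $$\max\{rvc(G_m),\,n+1\}\leq rvcl(G_m\diamond K_n)\leq m+n+|E(G_m)|-1.$$
   Context: All graphs are finite, simple, connected and undirected; $d$ denotes graph distance. A rainbow vertex $k$-coloring of $G$ is a map $c:V(G)\to\{1,\dots,k\}$ such that every two vertices are joined by a path whose internal vertices all receive distinct colors; $rvc(G)$ is the least $k$ for which $G$ has one. For such $c$ let $R_i=c^{-1}(i)$; the rainbow code of $v$ is $(d(v,R_1),\dots,d(v,R_k))$ with $d(v,R_i)=\min_{x\in R_i}d(v,x)$. A locating rainbow $k$-coloring is a rainbow vertex $k$-coloring in which distinct vertices have distinct rainbow codes; $rvcl(G)$ is the least $k$ for which one exists. For graphs $G_m$ (order $m$) and $H_n$ (order $n$) on disjoint vertex sets, the edge corona $G_m\diamond H_n$ is obtained from one copy of $G_m$ and $|E(G_m)|$ vertex-disjoint copies of $H_n$, one per edge of $G_m$, by joining both end vertices of the $j$-th edge of $G_m$ to every vertex of the $j$-th copy of $H_n$. *)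

theory Defs
  imports Main "HOL-Library.Extended_Nat"
begin

type_synonym 'a graph = "'a set \<times> 'a set set"

definition verts :: "'a graph \<Rightarrow> 'a set" where "verts G = fst G"
definition edges :: "'a graph \<Rightarrow> 'a set set" where "edges G = snd G"

definition simple_graph :: "'a graph \<Rightarrow> bool" where
  "simple_graph G \<longleftrightarrow> finite (verts G) \<and>
     (\<forall>e\<in>edges G. e \<subseteq> verts G \<and> card e = 2)"

definition is_path :: "'a graph \<Rightarrow> 'a list \<Rightarrow> bool" where
  "is_path G p \<longleftrightarrow> p \<noteq> [] \<and> set p \<subseteq> verts G \<and> distinct p \<and>
     (\<forall>i. Suc i < length p \<longrightarrow> {p ! i, p ! Suc i} \<in> edges G)"

definition connected_graph :: "'a graph \<Rightarrow> bool" where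
  "connected_graph G \<longleftrightarrow> (\<forall>u\<in>verts G. \<forall>v\<in>verts G. \<exists>p. is_path G p \<and> hd p = u \<and> last p = v)"

text \<open>Graph distance (infinite if no path exists).\<close>
definition gdist :: "'a graph \<Rightarrow> 'a \<Rightarrow> 'a \<Rightarrow> enat" where
  "gdist G u v = Inf {enat (length p - 1) | p. is_path G p \<and> hd p = u \<and> last p = v}"

text \<open>Distance from a vertex to a set (infinite for the empty set).\<close>
definition gdist_set :: "'a graph \<Rightarrow> 'a \<Rightarrow> 'a set \<Rightarrow> enat" where
  "gdist_set G v R = Inf (gdist G v ` R)"

definition internal :: "'a list \<Rightarrow> 'a list" where
  "internal p = butlast (tl p)"

definition rainbow_vertex_coloring :: "'a graph \<Rightarrow> nat \<Rightarrow> ('a \<Rightarrow> nat) \<Rightarrow> bool" where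
  "rainbow_vertex_coloring G k c \<longleftrightarrow>
     (\<forall>v\<in>verts G. c v \<in> {1..k}) \<and>
     (\<forall>u\<in>verts G. \<forall>v\<in>verts G. \<exists>p. is_path G p \<and> hd p = u \<and> last p = v \<and>
         distinct (map c (internal p)))"

definition rvc :: "'a graph \<Rightarrow> nat" where
  "rvc G = (LEAST k. \<exists>c. rainbow_vertex_coloring G k c)"

definition color_class :: "'a graph \<Rightarrow> ('a \<Rightarrow> nat) \<Rightarrow> nat \<Rightarrow> 'a set" where
  "color_class G c i = {x \<in> verts G. c x = i}"

definition rainbow_code :: "'a graph \<Rightarrow> nat \<Rightarrow> ('a \<Rightarrow> nat) \<Rightarrow> 'a \<Rightarrow> enat list" where
  "rainbow_code G k c v = map (\<lambda>i. gdist_set G v (color_class G c i)) [1..<k+1]"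

definition locating_rainbow_coloring :: "'a graph \<Rightarrow> nat \<Rightarrow> ('a \<Rightarrow> nat) \<Rightarrow> bool" where
  "locating_rainbow_coloring G k c \<longleftrightarrow> rainbow_vertex_coloring G k c \<and>
     inj_on (rainbow_code G k c) (verts G)"

definition rvcl :: "'a graph \<Rightarrow> nat" where
  "rvcl G = (LEAST k. \<exists>c. locating_rainbow_coloring G k c)"

definition complete_graph :: "nat \<Rightarrow> nat graph" where
  "complete_graph n = ({0..<n}, {e. e \<subseteq> {0..<n} \<and> card e = 2})"

text \<open>Edge corona G \<diamond> H: vertices Inl v for v in V(G), and Inr (e, w) for each edge e
 of G (indexing the copy of H) and w in V(H).\<close>
definition edge_corona :: "'a graph \<Rightarrow> 'b graph \<Rightarrow> ('a + ('a set \<times> 'b)) graph" where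
  "edge_corona G H =
    (Inl ` verts G \<union> {Inr (e, w) | e w. e \<in> edges G \<and> w \<in> verts H},
     (\<lambda>e. Inl ` e) ` edges G
     \<union> {{Inr (e, w), Inr (e, w')} | e w w'. e \<in> edges G \<and> {w, w'} \<in> edges H}
     \<union> {{Inl u, Inr (e, w)} | u e w. e \<in> edges G \<and> u \<in> e \<and> w \<in> verts H})"

end

theory Submission
  imports Defs
begin


lemma is_path_succ: "is_path G p \<longleftrightarrow> p \<noteq> [] \<and> set p \<subseteq> verts G \<and> distinct p \<and>
   successively (\<lambda>a b. {a,b} \<in> edges G) p"
  unfolding is_path_def successively_conv_nth by blast

lemma gd_le: "is_path G p \<Longrightarrow> hd p = u \<Longrightarrow> last p = v \<Longrightarrow> gdist G u v \<le> enat (length p - 1)"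
  unfolding gdist_def by (rule Inf_lower) blast

lemma gd_self: "u \<in> verts G \<Longrightarrow> gdist G u u = 0"
proof -
  assume "u \<in> verts G"
  then have "is_path G [u]" by (simp add: is_path_def)
  from gd_le[OF this] have "gdist G u u \<le> 0" by (simp add: zero_enat_def)
  then show ?thesis by simp
qed

lemma gd_adj: "{u,v} \<in> edges G \<Longrightarrow> u \<noteq> v \<Longrightarrow> u \<in> verts G \<Longrightarrow> v \<in> verts G \<Longrightarrow> gdist G u v \<le> 1"
proof -
  assume a: "{u,v} \<in> edges G" "u \<noteq> v" "u \<in> verts G" "v \<in> verts G"
  then have "is_path G [u,v]" by (simp add: is_path_succ)
  from gd_le[OF this] show ?thesis by (simp add: one_enat_def)
qed

lemma gd_lower: "(\<And>p. is_path G p \<Longrightarrow> hd p = u \<Longrightarrow> last p = v \<Longrightarrow> t \<le> enat (length p - 1)) \<Longrightarrow> t \<le> gdist G u v"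
  unfolding gdist_def by (rule Inf_greatest) blast

lemma gd_pos: "u \<noteq> v \<Longrightarrow> 1 \<le> gdist G u v"
proof (rule gd_lower)
  fix p assume a: "u \<noteq> v" "is_path G p" "hd p = u" "last p = v"
  then have "length p \<noteq> 1" by (cases p) (auto simp: is_path_def)
  moreover have "length p \<noteq> 0" using a by (simp add: is_path_def)
  ultimately have "length p \<ge> 2" by linarith
  then show "1 \<le> enat (length p - 1)" by (simp add: one_enat_def)
qed

lemma gd_ge2: "u \<noteq> v \<Longrightarrow> {u,v} \<notin> edges G \<Longrightarrow> 2 \<le> gdist G u v"
proof (rule gd_lower)
  fix p assume a: "u \<noteq> v" "{u,v} \<notin> edges G" "is_path G p" "hd p = u" "last p = v"
  have "length p \<noteq> 0" using a by (simp add: is_path_def)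
  moreover have "length p \<noteq> 1" using a by (cases p) auto
  moreover have "length p \<noteq> 2"
  proof
    assume "length p = 2"
    then obtain x y where "p = [x,y]" by (cases p; cases "tl p") auto
    then show False using a by (auto simp: is_path_def)
  qed
  ultimately have "length p \<ge> 3" by linarith
  then show "2 \<le> enat (length p - 1)" by (simp add: numeral_eq_enat)
qed

lemma gs_le: "z \<in> R \<Longrightarrow> gdist_set G x R \<le> gdist G x z"
  unfolding gdist_set_def by (rule Inf_lower) simp

lemma gs_ge: "(\<And>z. z \<in> R \<Longrightarrow> t \<le> gdist G x z) \<Longrightarrow> t \<le> gdist_set G x R"
  unfolding gdist_set_def by (rule Inf_greatest) auto

lemma gs_zero: "x \<in> R \<Longrightarrow> x \<in> verts G \<Longrightarrow> gdist_set G x R = 0"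
  using gs_le[of x R G x] gd_self[of x G] by simp

lemma gs_pos: "x \<notin> R \<Longrightarrow> 1 \<le> gdist_set G x R"
  by (rule gs_ge) (metis gd_pos)

lemma gs_one: "x \<notin> R \<Longrightarrow> z \<in> R \<Longrightarrow> {x,z} \<in> edges G \<Longrightarrow> x \<in> verts G \<Longrightarrow> z \<in> verts G
  \<Longrightarrow> gdist_set G x R = 1"
  by (metis antisym gd_adj gs_le gs_pos order_trans)

lemma code_eq: "rainbow_code G k c x = rainbow_code G k c y \<longleftrightarrow>
   (\<forall>i\<in>{1..k}. gdist_set G x (color_class G c i) = gdist_set G y (color_class G c i))"
  unfolding rainbow_code_def map_eq_conv by auto

lemma code_eq_color: "rainbow_code G k c x = rainbow_code G k c y \<Longrightarrow> c x \<in> {1..k}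
  \<Longrightarrow> x \<in> verts G \<Longrightarrow> y \<in> verts G \<Longrightarrow> c y = c x"
proof -
  assume a: "rainbow_code G k c x = rainbow_code G k c y" "c x \<in> {1..k}" "x \<in> verts G" "y \<in> verts G"
  have "gdist_set G x (color_class G c (c x)) = 0"
    using a by (intro gs_zero) (auto simp: color_class_def)
  then have "gdist_set G y (color_class G c (c x)) = 0" using a code_eq by metis
  then have "y \<in> color_class G c (c x)" using gs_pos by (metis not_one_le_zero)
  then show ?thesis by (simp add: color_class_def)
qed

lemma verts_pair[simp]: "verts (A, B) = A" by (simp add: verts_def)
lemma edges_pair[simp]: "edges (A, B) = B" by (simp add: edges_def)

lemma inl_in: "Inl a \<in> verts (edge_corona G (complete_graph n)) \<longleftrightarrow> a \<in> verts G"
  by (auto simp: edge_corona_def complete_graph_def)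
lemma inr_in: "Inr (e,w) \<in> verts (edge_corona G (complete_graph n)) \<longleftrightarrow> e \<in> edges G \<and> w < n"
  by (auto simp: edge_corona_def complete_graph_def)

lemma ekn: "{w, w'} \<in> edges (complete_graph n) \<longleftrightarrow> w \<noteq> w' \<and> w < n \<and> w' < n"
  by (auto simp: complete_graph_def card_2_iff)

lemma un3: "x \<in> A \<union> B \<union> C \<Longrightarrow> x \<notin> B \<Longrightarrow> x \<notin> C \<Longrightarrow> x \<in> A" by blast

lemma e1: "{Inl a, Inl b} \<in> edges (edge_corona G (complete_graph n)) \<longleftrightarrow> {a,b} \<in> edges G"
proof
  assume h: "{Inl a, Inl b} \<in> edges (edge_corona G (complete_graph n))"
  have nB: "{Inl a, Inl b} \<notin> {{Inr (e, w), Inr (e, w')} | e w w'. e \<in> edges G \<and> {w, w'} \<in> edges (complete_graph n)}"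
    by (auto simp: doubleton_eq_iff)
  have nC: "{Inl a, Inl b} \<notin> {{Inl u, Inr (e, w)} | u e w. e \<in> edges G \<and> u \<in> e \<and> w \<in> verts (complete_graph n)}"
    by (auto simp: doubleton_eq_iff)
  have "{Inl a, Inl b} \<in> (\<lambda>e. (Inl :: 'a \<Rightarrow> 'a + 'a set \<times> nat) ` e) ` edges G"
    by (rule un3[OF h[unfolded edge_corona_def edges_pair] nB nC])
  then obtain e where e0: "e \<in> edges G" "{Inl a, Inl b} = (Inl :: 'a \<Rightarrow> 'a + 'a set \<times> nat) ` e" by blast
  then have e: "e \<in> edges G" "(Inl :: 'a \<Rightarrow> 'a + 'a set \<times> nat) ` {a,b} = Inl ` e" by simp_all
  then have "{a,b} = e" using inj_image_eq_iff[OF inj_Inl] by metis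
  then show "{a,b} \<in> edges G" using e by simp
next
  assume "{a,b} \<in> edges G"
  then have "(Inl :: 'a \<Rightarrow> 'a + 'a set \<times> nat) ` {a,b} \<in> (\<lambda>e. Inl ` e) ` edges G" by blast
  then show "{Inl a, Inl b} \<in> edges (edge_corona G (complete_graph n))"
    by (simp add: edge_corona_def)
qed

lemma e2: "{Inl a, Inr (e,w)} \<in> edges (edge_corona G (complete_graph n)) \<longleftrightarrow> e \<in> edges G \<and> a \<in> e \<and> w < n"
  by (auto simp: edge_corona_def doubleton_eq_iff complete_graph_def)

lemma e2': "{Inr (e,w), Inl a} \<in> edges (edge_corona G (complete_graph n)) \<longleftrightarrow> e \<in> edges G \<and> a \<in> e \<and> w < n"
  by (simp add: insert_commute e2)

lemma e3: "{Inr (e,w), Inr (e',w')} \<in> edges (edge_corona G (complete_graph n)) \<longleftrightarrow>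
   e \<in> edges G \<and> e = e' \<and> w \<noteq> w' \<and> w < n \<and> w' < n"
proof
  assume "{Inr (e,w), Inr (e',w')} \<in> edges (edge_corona G (complete_graph n))"
  then show "e \<in> edges G \<and> e = e' \<and> w \<noteq> w' \<and> w < n \<and> w' < n"
    by (auto simp: edge_corona_def doubleton_eq_iff ekn)
next
  assume r: "e \<in> edges G \<and> e = e' \<and> w \<noteq> w' \<and> w < n \<and> w' < n"
  then have "{Inr (e,w), Inr (e',w')} \<in> {{Inr (e, w), Inr (e, w')} | e w w'. e \<in> edges G \<and> {w, w'} \<in> edges (complete_graph n)}"
    using ekn by blast
  then show "{Inr (e,w), Inr (e',w')} \<in> edges (edge_corona G (complete_graph n))"
    unfolding edge_corona_def edges_pair by (rule UnI1[OF UnI2])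
qed

lemma twin_gd:
  assumes "x \<in> verts G" "\<forall>z. z \<noteq> x \<and> z \<noteq> y \<longrightarrow> {y,z} \<in> edges G \<longrightarrow> {x,z} \<in> edges G"
    "z \<noteq> x" "z \<noteq> y"
  shows "gdist G x z \<le> gdist G y z"
proof (rule gd_lower)
  fix p assume p: "is_path G p" "hd p = y" "last p = z"
  show "gdist G x z \<le> enat (length p - 1)"
  proof (cases "x \<in> set p")
    case True
    then obtain i where i: "i < length p" "p ! i = x" by (metis in_set_conv_nth)
    have "is_path G (drop i p)"
      using p(1) i unfolding is_path_def
      by (auto dest: in_set_dropD simp: nth_drop)
    moreover have "hd (drop i p) = x" using i by (simp add: hd_drop_conv_nth)
    moreover have "last (drop i p) = z" using i p by simp
    ultimately have "gdist G x z \<le> enat (length (drop i p) - 1)" by (metis gd_le)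
    also have "\<dots> \<le> enat (length p - 1)" by simp
    finally show ?thesis .
  next
    case False
    have pne: "p \<noteq> []" using p by (simp add: is_path_def)
    then obtain rest where pr: "p = y # rest" using p(2) by (cases p) auto
    have "rest \<noteq> []" using pr p assms(3,4) by auto
    then obtain r rest' where rr: "rest = r # rest'" by (cases rest) auto
    have yr: "{y, r} \<in> edges G" "r \<noteq> y" "r \<noteq> x"
      using p(1) pr rr False by (auto simp: is_path_succ)
    have "{x, r} \<in> edges G" using assms(2) yr by blast
    then have "is_path G (x # rest)"
      using p(1) pr rr False assms(1) by (auto simp: is_path_succ)
    moreover have "last (x # rest) = z" using pr rr p by simp
    ultimately have "gdist G x z \<le> enat (length (x # rest) - 1)" by (metis gd_le list.sel(1))
    then show ?thesis using pr by simp
  qed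
qed

lemma twin_code:
  assumes "x \<in> verts G" "y \<in> verts G"
    "\<forall>z. z \<noteq> x \<and> z \<noteq> y \<longrightarrow> ({x,z} \<in> edges G \<longleftrightarrow> {y,z} \<in> edges G)"
    "c x = c y"
  shows "rainbow_code G k c x = rainbow_code G k c y"
  unfolding code_eq
proof
  fix i assume "i \<in> {1..k}"
  show "gdist_set G x (color_class G c i) = gdist_set G y (color_class G c i)"
  proof (cases "c x = i")
    case True
    then show ?thesis using assms by (simp add: gs_zero color_class_def)
  next
    case False
    have "gdist G x z = gdist G y z" if "z \<in> color_class G c i" for z
    proof -
      have "z \<noteq> x" "z \<noteq> y" using that False assms(4) by (auto simp: color_class_def)
      then show ?thesis using twin_gd[of x G y z] twin_gd[of y G x z] assms
        by (metis antisym)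
    qed
    then show ?thesis unfolding gdist_set_def by (metis (mono_tags, lifting) image_cong)
  qed
qed

lemma edge2: "card e = 2 \<Longrightarrow> a \<in> e \<Longrightarrow> b \<in> e \<Longrightarrow> a \<noteq> b \<Longrightarrow> e = {a,b}"
  by (auto simp: card_2_iff)

lemma proj:
  fixes P :: "('a + 'a set \<times> nat) list"
  assumes G: "simple_graph G"
  shows "successively (\<lambda>a b. {a,b} \<in> edges (edge_corona G (complete_graph n))) P \<Longrightarrow> distinct P
    \<Longrightarrow> P \<noteq> [] \<Longrightarrow> isl (last P) \<Longrightarrow>
    successively (\<lambda>a b. {a,b} \<in> edges G) (map projl (filter isl P)) \<and>
    (\<forall>e w. hd P = Inr (e,w) \<longrightarrow> filter isl P \<noteq> [] \<and> projl (hd (filter isl P)) \<in> e)"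
proof (induction P)
  case Nil
  then show ?case by simp
next
  case (Cons x P')
  show ?case
  proof (cases P')
    case Nil
    then show ?thesis using Cons.prems by (cases x) auto
  next
    case (Cons y zs)
    note P'=Cons
  have IH: "successively (\<lambda>a b. {a,b} \<in> edges G) (map projl (filter isl (y # zs))) \<and>
    (\<forall>e w. y = Inr (e,w) \<longrightarrow> filter isl (y # zs) \<noteq> [] \<and> projl (hd (filter isl (y # zs))) \<in> e)"
  proof -
    have pr: "successively (\<lambda>a b. {a,b} \<in> edges (edge_corona G (complete_graph n))) P'"
      "distinct P'" "P' \<noteq> []" "isl (last P')"
      using Cons.prems(1,2,4) P' by (simp_all add: successively_Cons)
    show ?thesis using Cons.IH[OF pr] unfolding P' list.sel(1) .
  qed
  note 3 = Cons.IH Cons.prems[unfolded P']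
  have ed: "{x,y} \<in> edges (edge_corona G (complete_graph n))" using 3(2) by simp
  have xn: "x \<notin> set (y # zs)" using 3(3) by simp
  have fne: "filter isl (y # zs) \<noteq> []"
  proof -
    have "last (y#zs) \<in> set (y#zs)" by simp
    moreover have "isl (last (y#zs))" using 3(5) by simp
    ultimately show ?thesis by (metis filter_empty_conv)
  qed
  have hdin: "hd (filter isl (y # zs)) \<in> set (y # zs)" "isl (hd (filter isl (y # zs)))"
    using hd_in_set[OF fne] by auto
  show ?thesis
  proof (cases x)
    case (Inl a)
    note xa = Inl
    show ?thesis
    proof (cases y)
      case (Inl b)
      then have "{a,b} \<in> edges G" using ed xa e1 by metis
      then show ?thesis using IH P' xa Inl by simp
    next
      case (Inr ew)
      then obtain e w where yw: "y = Inr (e,w)" by (cases ew) auto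
      have "e \<in> edges G" "a \<in> e" using ed xa yw e2 by metis+
      then have ce: "card e = 2" using G by (simp add: simple_graph_def)
      define b where "b = projl (hd (filter isl (y # zs)))"
      have bi: "b \<in> e" using IH P' yw b_def by blast
      have "Inl b = hd (filter isl (y # zs))" using hdin(2) b_def by simp
      then have "Inl b \<in> set (y # zs)" using hdin(1) by simp
      then have "b \<noteq> a" using xn xa by auto
      then have "e = {a,b}" using edge2[OF ce \<open>a \<in> e\<close> bi] by simp
      then have "{a,b} \<in> edges G" using \<open>e \<in> edges G\<close> by simp
      then show ?thesis using IH P' xa yw fne b_def
        by (simp add: successively_Cons hd_map)
    qed
  next
    case (Inr ew)
    then obtain e w where xw: "x = Inr (e,w)" by (cases ew) auto
    show ?thesis
    proof (cases y)
      case (Inl b)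
      then have "b \<in> e" using ed xw e2' by metis
      then show ?thesis using IH P' xw Inl by simp
    next
      case (Inr ew')
      then obtain e' w' where yw: "y = Inr (e',w')" by (cases ew') auto
      then have "e' = e" using ed xw e3 by metis
      then show ?thesis using IH P' xw yw fne by simp
    qed
  qed
  qed
qed



lemma sum_projl_inj0: "inj_on projl (Collect isl)"
proof (rule inj_onI)
  fix x y :: "'a + 'b" assume "x \<in> Collect isl" "y \<in> Collect isl" "projl x = projl y"
  then show "x = y" by (cases x; cases y) auto
qed

lemma sum_projl_inj: "inj_on projl {x \<in> A. isl x}"
  by (rule inj_on_subset[OF sum_projl_inj0]) auto

lemma lower_rvc:
  fixes G :: "'a graph"
  assumes G: "simple_graph G"
    and c0: "locating_rainbow_coloring (edge_corona G (complete_graph n)) k c0"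
  shows "rvc G \<le> k"
proof -
  let ?H = "edge_corona G (complete_graph n)"
  have c0r: "rainbow_vertex_coloring ?H k c0" using c0 by (simp add: locating_rainbow_coloring_def)
  have "rainbow_vertex_coloring G k (\<lambda>v. c0 (Inl v))"
    unfolding rainbow_vertex_coloring_def
  proof (intro conjI ballI)
    fix v assume "v \<in> verts G"
    then have "Inl v \<in> verts ?H" by (simp add: inl_in)
    then show "c0 (Inl v) \<in> {1..k}" using c0r unfolding rainbow_vertex_coloring_def by blast
  next
    fix u v assume u: "u \<in> verts G" and v: "v \<in> verts G"
    show "\<exists>p. is_path G p \<and> hd p = u \<and> last p = v \<and> distinct (map (\<lambda>v. c0 (Inl v)) (internal p))"
    proof (cases "u = v")
      case True
      then show ?thesis using u True by (intro exI[of _ "[u]"]) (simp add: is_path_def internal_def)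
    next
      case False
      have rbH: "\<And>x y. x \<in> verts ?H \<Longrightarrow> y \<in> verts ?H \<Longrightarrow>
          \<exists>p. is_path ?H p \<and> hd p = x \<and> last p = y \<and> distinct (map c0 (internal p))"
        using c0r unfolding rainbow_vertex_coloring_def by blast
      have uH: "Inl u \<in> verts ?H" using u by (simp add: inl_in)
      have vH: "Inl v \<in> verts ?H" using v by (simp add: inl_in)
      obtain P where P: "is_path ?H P" "hd P = Inl u" "last P = Inl v" "distinct (map c0 (internal P))"
        using rbH[OF uH vH] by blast
      have "P \<noteq> []" using P by (simp add: is_path_def)
      then obtain rest where Pr: "P = Inl u # rest" using P(2) by (cases P) auto
      have "rest \<noteq> []" using Pr P(3) False by auto
      define mid where "mid = butlast rest"
      have "last rest = Inl v" using P(3) Pr \<open>rest \<noteq> []\<close> by simp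
      then have "rest = mid @ [Inl v]"
        using append_butlast_last_id[OF \<open>rest \<noteq> []\<close>] unfolding mid_def by simp
      then have Pdec: "P = Inl u # mid @ [Inl v]" using Pr by simp
      define q where "q = map projl (filter isl P)"
      have qdec: "q = u # map projl (filter isl mid) @ [v]" by (simp add: q_def Pdec)
      have Pp: "successively (\<lambda>a b. {a,b} \<in> edges ?H) P" "distinct P" "set P \<subseteq> verts ?H"
        using P(1) by (auto simp: is_path_succ)
      have succ: "successively (\<lambda>a b. {a,b} \<in> edges G) q"
        using proj[OF G, of n P] Pp \<open>P \<noteq> []\<close> P(3) unfolding q_def by simp
      have setq: "set q \<subseteq> verts G"
      proof
        fix x assume "x \<in> set q"
        then obtain y where y: "y \<in> set P" "isl y" "x = projl y" unfolding q_def by auto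
        have "y \<in> verts ?H" using Pp(3) y(1) by blast
        moreover have "y = Inl x" using y(2,3) by (cases y) auto
        ultimately show "x \<in> verts G" by (simp add: inl_in)
      qed
      have "distinct q" unfolding q_def using Pp(2)
        by (simp add: distinct_map sum_projl_inj)
      moreover have "q \<noteq> []" using qdec by simp
      ultimately have "is_path G q" using succ setq by (simp add: is_path_succ)
      moreover have "hd q = u" "last q = v" using qdec by simp_all
      moreover have "distinct (map (\<lambda>v. c0 (Inl v)) (internal q))"
      proof -
        have "internal q = map projl (filter isl mid)" using qdec by (simp add: internal_def)
        then have "map (\<lambda>v. c0 (Inl v)) (internal q) = map c0 (filter isl mid)"
          by (simp add: map_idI)
        moreover have "internal P = mid" using Pdec by (simp add: internal_def)
        ultimately show ?thesis using P(4) by (simp add: distinct_map_filter)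
      qed
      ultimately show ?thesis by blast
    qed
  qed
  then show ?thesis unfolding rvc_def by (rule Least_le[where P = "\<lambda>k. \<exists>c. rainbow_vertex_coloring G k c", OF exI])
qed



lemma lower_n:
  fixes G :: "'a graph"
  assumes e0: "e0 \<in> edges G" and a: "a \<in> e0" "a \<in> verts G"
    and c0: "locating_rainbow_coloring (edge_corona G (complete_graph n)) k c0"
  shows "n + 1 \<le> k"
proof (rule ccontr)
  let ?H = "edge_corona G (complete_graph n)"
  assume "\<not> n + 1 \<le> k"
  then have kn: "k \<le> n" by simp
  have c0r: "rainbow_vertex_coloring ?H k c0" and c0i: "inj_on (rainbow_code ?H k c0) (verts ?H)"
    using c0 by (simp_all add: locating_rainbow_coloring_def)
  have col: "\<And>x. x \<in> verts ?H \<Longrightarrow> c0 x \<in> {1..k}" using c0r by (simp add: rainbow_vertex_coloring_def)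
  have inrv: "\<And>w. w < n \<Longrightarrow> Inr (e0,w) \<in> verts ?H" using e0 inr_in by metis
  have av: "Inl a \<in> verts ?H" using a inl_in by metis
  define \<phi> where "\<phi> w = c0 (Inr (e0,w))" for w
  have inj\<phi>: "inj_on \<phi> {0..<n}"
  proof (rule inj_onI)
    fix w w' assume w: "w \<in> {0..<n}" "w' \<in> {0..<n}" "\<phi> w = \<phi> w'"
    show "w = w'"
    proof (rule ccontr)
      assume ne: "w \<noteq> w'"
      have tw: "\<forall>z. z \<noteq> Inr (e0,w) \<and> z \<noteq> Inr (e0,w') \<longrightarrow>
          ({Inr (e0,w), z} \<in> edges ?H \<longleftrightarrow> {Inr (e0,w'), z} \<in> edges ?H)"
      proof (intro allI impI)
        fix z :: "'a + 'a set \<times> nat" assume z: "z \<noteq> Inr (e0,w) \<and> z \<noteq> Inr (e0,w')"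
        show "{Inr (e0,w), z} \<in> edges ?H \<longleftrightarrow> {Inr (e0,w'), z} \<in> edges ?H"
        proof (cases z)
          case (Inl b)
          then show ?thesis using w by (simp add: e2')
        next
          case (Inr ew)
          then obtain e'' w'' where "z = Inr (e'',w'')" by (cases ew) auto
          then show ?thesis using w z by (auto simp: e3)
        qed
      qed
      have wn: "w < n" "w' < n" using w by auto
      have ceq: "rainbow_code ?H k c0 (Inr (e0,w)) = rainbow_code ?H k c0 (Inr (e0,w'))"
        using twin_code[OF inrv inrv tw] w by (simp add: \<phi>_def)
      show False using inj_onD[OF c0i ceq inrv[OF wn(1)] inrv[OF wn(2)]] ne by simp
    qed
  qed
  have sub: "\<phi> ` {0..<n} \<subseteq> {1..k}" using col inrv by (auto simp: \<phi>_def)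
  have cardn: "card (\<phi> ` {0..<n}) = n" using card_image[OF inj\<phi>] by simp
  then have "n \<le> k" using card_mono[OF _ sub] by simp
  then have "card (\<phi> ` {0..<n}) = card {1..k}" using kn cardn by simp
  then have full: "\<phi> ` {0..<n} = {1..k}" using card_subset_eq[OF _ sub] by simp
  have "c0 (Inl a) \<in> \<phi> ` {0..<n}" using col[OF av] full by simp
  then obtain w where w: "w < n" "\<phi> w = c0 (Inl a)" by auto
  have ceq: "rainbow_code ?H k c0 (Inl a) = rainbow_code ?H k c0 (Inr (e0,w))"
    unfolding code_eq
  proof
    fix i assume i: "i \<in> {1..k}"
    show "gdist_set ?H (Inl a) (color_class ?H c0 i) = gdist_set ?H (Inr (e0,w)) (color_class ?H c0 i)"
    proof (cases "i = c0 (Inl a)")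
      case True
      then show ?thesis using av inrv[OF w(1)] w(2)
        by (simp add: gs_zero color_class_def \<phi>_def)
    next
      case False
      have "i \<in> \<phi> ` {0..<n}" using i full by simp
      then obtain w' where w': "w' < n" "\<phi> w' = i" by auto
      have "w' \<noteq> w" using w' w False by auto
      have zR: "Inr (e0,w') \<in> color_class ?H c0 i" using w' inrv by (simp add: color_class_def \<phi>_def)
      have "gdist_set ?H (Inl a) (color_class ?H c0 i) = 1"
        by (rule gs_one[OF _ zR]) (use False av inrv w' e0 a in \<open>auto simp: color_class_def e2\<close>)
      moreover have "gdist_set ?H (Inr (e0,w)) (color_class ?H c0 i) = 1"
        by (rule gs_one[OF _ zR]) (use False w inrv w' e0 \<open>w' \<noteq> w\<close> in \<open>auto simp: color_class_def e3 \<phi>_def\<close>)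
      ultimately show ?thesis by simp
    qed
  qed
  show False using inj_onD[OF c0i ceq av inrv[OF w(1)]] by simp
qed



locale corona =
  fixes G :: "'a graph" and n m :: nat and g :: "'a \<Rightarrow> nat" and f :: "'a set \<Rightarrow> nat" and e0 :: "'a set"
  assumes n2: "n \<ge> 2" and G: "simple_graph G" and conn: "connected_graph G" and cardV: "card (verts G) = m"
    and e0: "e0 \<in> edges G"
    and g: "bij_betw g (verts G) {0..<m}" and f: "bij_betw f (edges G) {0..<card (edges G)}"
begin

abbreviation "H \<equiv> edge_corona G (complete_graph n)"

definition "K = m + n + card (edges G) - 1"

definition "c = (\<lambda>x. case x of Inl v \<Rightarrow> g v + 1
      | Inr (e,w) \<Rightarrow> (if w = 0 \<and> 1 \<le> f e then m + n + f e else m + w + 1))"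

lemma cInl[simp]: "c (Inl v) = g v + 1" by (simp add: c_def)
lemma cInr[simp]: "c (Inr (e,w)) = (if w = 0 \<and> 1 \<le> f e then m + n + f e else m + w + 1)"
  by (simp add: c_def)

lemma finV: "finite (verts G)" using G by (simp add: simple_graph_def)
lemma esub: "e \<in> edges G \<Longrightarrow> e \<subseteq> verts G \<and> card e = 2" using G by (simp add: simple_graph_def)
lemma finE: "finite (edges G)"
  by (rule finite_subset[of _ "Pow (verts G)"]) (use esub finV in auto)
lemma Epos: "1 \<le> card (edges G)" using e0 finE by (metis One_nat_def Suc_leI card_gt_0_iff empty_iff)
lemma gv: "v \<in> verts G \<Longrightarrow> g v < m" using g by (auto dest: bij_betwE)
lemma ginj: "inj_on g (verts G)" using g by (rule bij_betw_imp_inj_on)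
lemma fe: "e \<in> edges G \<Longrightarrow> f e < card (edges G)" using f by (auto dest: bij_betwE)
lemma finj: "inj_on f (edges G)" using f by (rule bij_betw_imp_inj_on)

lemma vHc: "x \<in> verts H \<Longrightarrow> (\<And>v. x = Inl v \<Longrightarrow> v \<in> verts G \<Longrightarrow> P)
      \<Longrightarrow> (\<And>e w. x = Inr (e,w) \<Longrightarrow> e \<in> edges G \<Longrightarrow> w < n \<Longrightarrow> P) \<Longrightarrow> P"
proof -
  assume x: "x \<in> verts H" and h1: "\<And>v. x = Inl v \<Longrightarrow> v \<in> verts G \<Longrightarrow> P"
    and h2: "\<And>e w. x = Inr (e,w) \<Longrightarrow> e \<in> edges G \<Longrightarrow> w < n \<Longrightarrow> P"
  show P
  proof (cases x)
    case (Inl v) then show P using h1 x by (simp add: inl_in)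
  next
    case (Inr ew)
    then obtain e w where ew: "x = Inr (e,w)" by (cases ew) auto
    then show P using h2 x by (simp add: inr_in)
  qed
qed

lemma range: "x \<in> verts H \<Longrightarrow> c x \<in> {1..K}"
proof (erule vHc)
  fix v assume "x = Inl v" "v \<in> verts G"
  then show "c x \<in> {1..K}" using gv[of v] Epos by (auto simp: K_def)
next
  fix e w assume "x = Inr (e,w)" "e \<in> edges G" "w < n"
  then show "c x \<in> {1..K}" using fe[of e] Epos by (auto simp: K_def)
qed

lemma dl: "distinct ys \<Longrightarrow> set ys \<subseteq> verts G \<Longrightarrow> distinct (map c (map Inl ys))"
proof -
  assume ys: "distinct ys" "set ys \<subseteq> verts G"
  have "inj_on (\<lambda>v. g v + 1) (set ys)" using inj_on_subset[OF ginj ys(2)] by (simp add: inj_on_def)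
  then show "distinct (map c (map Inl ys))" using ys(1) by (simp add: distinct_map comp_def)
qed

lemma Gpath: "is_path G p \<Longrightarrow> is_path H (map Inl p)"
  by (auto simp: is_path_succ successively_map e1 inl_in distinct_map inj_on_def)

lemma intp: assumes p: "is_path G p"
  shows "distinct (map c (map Inl (butlast p)))" "distinct (map c (map Inl (tl p)))"
     "distinct (map c (map Inl p))" "distinct (map c (map Inl (internal p)))"
proof -
  have d: "distinct p" "set p \<subseteq> verts G" using p by (auto simp: is_path_def)
  have s1: "set (tl p) \<subseteq> set p" by (cases p) auto
  have s2: "set (butlast p) \<subseteq> set p" by (auto dest: in_set_butlastD)
  have s3: "set (internal p) \<subseteq> set p" using s1 by (auto simp: internal_def dest: in_set_butlastD)
  have b1: "distinct (butlast p)" "distinct (tl p)" "distinct (internal p)"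
    using d(1) by (simp_all add: internal_def distinct_butlast distinct_tl)
  show "distinct (map c (map Inl (butlast p)))" using dl[OF b1(1) order_trans[OF s2 d(2)]] .
  show "distinct (map c (map Inl (tl p)))" using dl[OF b1(2) order_trans[OF s1 d(2)]] .
  show "distinct (map c (map Inl p))" using dl[OF d(1) d(2)] .
  show "distinct (map c (map Inl (internal p)))" using dl[OF b1(3) order_trans[OF s3 d(2)]] .
qed

lemma connG: "a \<in> verts G \<Longrightarrow> b \<in> verts G \<Longrightarrow> \<exists>p. is_path G p \<and> hd p = a \<and> last p = b"
  using conn by (simp add: connected_graph_def)

lemma anchor: "e \<in> edges G \<Longrightarrow> \<exists>a. a \<in> e \<and> a \<in> verts G"
proof -
  assume "e \<in> edges G"
  then have "e \<subseteq> verts G" "card e = 2" using esub by auto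
  then show "\<exists>a. a \<in> e \<and> a \<in> verts G" by (metis card_2_iff insertI1 subsetD)
qed

lemma pne: "is_path G p \<Longrightarrow> p \<noteq> []" by (simp add: is_path_def)

definition "rbp u v \<longleftrightarrow> (\<exists>p. is_path H p \<and> hd p = u \<and> last p = v \<and> distinct (map c (internal p)))"

end

context corona begin
lemma rb_ll: assumes ab: "a \<in> verts G" "b \<in> verts G" shows "rbp (Inl a) (Inl b)"
proof -
  obtain p where p: "is_path G p" "hd p = a" "last p = b" using connG[OF ab] by blast
  have ne: "p \<noteq> []" using pne p(1) .
  have i: "internal (map Inl p :: ('a + 'a set \<times> nat) list) = map Inl (internal p)" by (simp add: internal_def map_butlast map_tl)
  have "hd (map Inl p) = Inl a" using ne p by (simp add: hd_map)
  moreover have "last (map Inl p) = Inl b" using ne p by (simp add: last_map)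
  moreover have "distinct (map c (internal (map Inl p)))" using i intp(4)[OF p(1)] by simp
  ultimately show ?thesis unfolding rbp_def using Gpath[OF p(1)] by blast
qed
end

context corona begin
lemma rb_rl: assumes r: "e \<in> edges G" "w < n" and b: "b \<in> verts G" shows "rbp (Inr (e,w)) (Inl b)"
proof -
  obtain a where a: "a \<in> e" "a \<in> verts G" using anchor[OF r(1)] by blast
  obtain p where p: "is_path G p" "hd p = a" "last p = b" using connG[OF a(2) b] by blast
  have ne: "p \<noteq> []" using pne p(1) .
  have gp: "set (map Inl p) \<subseteq> verts H" "distinct (map Inl p :: ('a + 'a set \<times> nat) list)"
     "successively (\<lambda>x y. {x,y} \<in> edges H) (map Inl p)"
    using Gpath[OF p(1)] unfolding is_path_succ by blast+
  have hdm: "hd (map Inl p :: ('a + 'a set \<times> nat) list) = Inl a" using ne p by (simp add: hd_map)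
  have edge: "{Inr (e,w), Inl a} \<in> edges H" using r a by (simp add: e2')
  have s: "successively (\<lambda>x y. {x,y} \<in> edges H) (Inr (e,w) # map Inl p)"
    unfolding successively_Cons using edge hdm gp(3) by simp
  have st: "set (Inr (e,w) # map Inl p) \<subseteq> verts H" using gp(1) r by (simp add: inr_in)
  have d: "distinct (Inr (e,w) # map Inl p)" using gp(2) by auto
  have ip: "is_path H (Inr (e,w) # map Inl p)" unfolding is_path_succ using s st d by blast
  have i: "internal (Inr (e,w) # map Inl p) = map Inl (butlast p)" by (simp add: internal_def map_butlast)
  have l: "last (Inr (e,w) # map Inl p) = Inl b" using ne p by (simp add: last_map)
  show ?thesis unfolding rbp_def using ip i l intp(1)[OF p(1)] by (intro exI[of _ "Inr (e,w) # map Inl p"]) simp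
qed
end

context corona begin
lemma rb_lr: assumes a: "a \<in> verts G" and r: "e \<in> edges G" "w < n" shows "rbp (Inl a) (Inr (e,w))"
proof -
  obtain b where b: "b \<in> e" "b \<in> verts G" using anchor[OF r(1)] by blast
  obtain p where p: "is_path G p" "hd p = a" "last p = b" using connG[OF a b(2)] by blast
  have ne: "p \<noteq> []" using pne p(1) .
  have gp: "set (map Inl p) \<subseteq> verts H" "distinct (map Inl p :: ('a + 'a set \<times> nat) list)"
     "successively (\<lambda>x y. {x,y} \<in> edges H) (map Inl p)"
    using Gpath[OF p(1)] unfolding is_path_succ by blast+
  have lm: "last (map Inl p :: ('a + 'a set \<times> nat) list) = Inl b" using ne p by (simp add: last_map)
  have hdm: "hd (map Inl p @ [Inr (e,w)]) = Inl a" using ne p by (simp add: hd_map)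
  have edge: "{Inl b, Inr (e,w)} \<in> edges H" using r b by (simp add: e2)
  have s: "successively (\<lambda>x y. {x,y} \<in> edges H) (map Inl p @ [Inr (e,w)])"
    unfolding successively_append_iff using edge lm gp(3) by simp
  have st: "set (map Inl p @ [Inr (e,w)]) \<subseteq> verts H" using gp(1) r by (simp add: inr_in)
  have d: "distinct (map Inl p @ [Inr (e,w)])" using gp(2) by auto
  have ip: "is_path H (map Inl p @ [Inr (e,w)])" unfolding is_path_succ using s st d by blast
  have i: "internal (map Inl p @ [Inr (e,w)]) = map Inl (tl p)" using ne
    by (cases p) (simp_all add: internal_def)
  show ?thesis unfolding rbp_def using ip i hdm intp(2)[OF p(1)]
    by (intro exI[of _ "map Inl p @ [Inr (e,w)]"]) simp
qed
end

context corona begin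
lemma rb_rr: assumes r: "e \<in> edges G" "w < n" and r': "e' \<in> edges G" "w' < n"
  shows "rbp (Inr (e,w)) (Inr (e',w'))"
proof (cases "e = e'")
  case True
  show ?thesis
  proof (cases "w = w'")
    case True
    have "is_path H [Inr (e,w)]" using r by (simp add: is_path_def inr_in)
    then show ?thesis unfolding rbp_def using True \<open>e = e'\<close>
      by (intro exI[of _ "[Inr (e,w)]"]) (simp add: internal_def)
  next
    case False
    have "{Inr (e,w), Inr (e',w')} \<in> edges H" using r r' \<open>e = e'\<close> False by (simp add: e3)
    moreover have "set [Inr (e,w), Inr (e',w')] \<subseteq> verts H" using r r' by (simp add: inr_in)
    moreover have "distinct [Inr (e,w), Inr (e',w')]" using False by simp
    ultimately have "is_path H [Inr (e,w), Inr (e',w')]" by (simp add: is_path_succ)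
    then show ?thesis unfolding rbp_def
      by (intro exI[of _ "[Inr (e,w), Inr (e',w')]"]) (simp add: internal_def)
  qed
next
  case False
  obtain a where a: "a \<in> e" "a \<in> verts G" using anchor[OF r(1)] by blast
  obtain b where b: "b \<in> e'" "b \<in> verts G" using anchor[OF r'(1)] by blast
  obtain p where p: "is_path G p" "hd p = a" "last p = b" using connG[OF a(2) b(2)] by blast
  have ne: "p \<noteq> []" using pne p(1) .
  have gp: "set (map Inl p) \<subseteq> verts H" "distinct (map Inl p :: ('a + 'a set \<times> nat) list)"
     "successively (\<lambda>x y. {x,y} \<in> edges H) (map Inl p)"
    using Gpath[OF p(1)] unfolding is_path_succ by blast+
  have lm: "last (map Inl p :: ('a + 'a set \<times> nat) list) = Inl b" using ne p by (simp add: last_map)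
  have hm: "hd (map Inl p @ [Inr (e',w')]) = Inl a" using ne p by (simp add: hd_map)
  have edge1: "{Inr (e,w), Inl a} \<in> edges H" using r a by (simp add: e2')
  have edge2: "{Inl b, Inr (e',w')} \<in> edges H" using r' b by (simp add: e2)
  have s1: "successively (\<lambda>x y. {x,y} \<in> edges H) (map Inl p @ [Inr (e',w')])"
    unfolding successively_append_iff using edge2 lm gp(3) by simp
  have s: "successively (\<lambda>x y. {x,y} \<in> edges H) (Inr (e,w) # map Inl p @ [Inr (e',w')])"
    unfolding successively_Cons using s1 hm edge1 by simp
  have st: "set (Inr (e,w) # map Inl p @ [Inr (e',w')]) \<subseteq> verts H" using gp(1) r r' by (simp add: inr_in)
  have d: "distinct (Inr (e,w) # map Inl p @ [Inr (e',w')])" using gp(2) False by auto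
  have ip: "is_path H (Inr (e,w) # map Inl p @ [Inr (e',w')])" unfolding is_path_succ using s st d by blast
  have i: "internal (Inr (e,w) # map Inl p @ [Inr (e',w')]) = map Inl p" by (simp add: internal_def)
  show ?thesis unfolding rbp_def using ip i intp(3)[OF p(1)]
    by (intro exI[of _ "Inr (e,w) # map Inl p @ [Inr (e',w')]"]) simp
qed
end

context corona begin

lemma rb: "rainbow_vertex_coloring H K c"
  unfolding rainbow_vertex_coloring_def
proof (intro conjI ballI)
  fix x assume "x \<in> verts H" then show "c x \<in> {1..K}" by (rule range)
next
  fix u v assume u: "u \<in> verts H" and v: "v \<in> verts H"
  have "rbp u v"
  proof (rule vHc[OF u])
    fix a assume ua: "u = Inl a" "a \<in> verts G"
    show "rbp u v"
    proof (rule vHc[OF v])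
      fix b assume "v = Inl b" "b \<in> verts G" then show ?thesis using rb_ll[OF ua(2)] ua(1) by simp
    next
      fix e w assume "v = Inr (e,w)" "e \<in> edges G" "w < n" then show ?thesis using rb_lr[OF ua(2)] ua(1) by simp
    qed
  next
    fix e w assume ur: "u = Inr (e,w)" "e \<in> edges G" "w < n"
    show "rbp u v"
    proof (rule vHc[OF v])
      fix b assume "v = Inl b" "b \<in> verts G" then show ?thesis using rb_rl[OF ur(2,3)] ur(1) by simp
    next
      fix e' w' assume "v = Inr (e',w')" "e' \<in> edges G" "w' < n" then show ?thesis using rb_rr[OF ur(2,3)] ur(1) by simp
    qed
  qed
  then show "\<exists>p. is_path H p \<and> hd p = u \<and> last p = v \<and> distinct (map c (internal p))"
    unfolding rbp_def .
qed

lemma sep: assumes a: "e \<in> edges G" "e' \<in> edges G" "e \<noteq> e'" "1 \<le> w" "w < n" "1 \<le> f e"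
  shows "rainbow_code H K c (Inr (e,w)) \<noteq> rainbow_code H K c (Inr (e',w))"
  proof
    assume eq: "rainbow_code H K c (Inr (e,w)) = rainbow_code H K c (Inr (e',w))"
    define j where "j = m + n + f e"
    have j: "j \<in> {1..K}" using fe[OF a(1)] n2 by (auto simp: j_def K_def)
    have z0: "Inr (e,0) \<in> color_class H c j" using a n2 inr_in[of e 0 G n]
      by (simp add: color_class_def j_def)
    have adj: "{Inr (e,w), Inr (e,0)} \<in> edges H" using a n2 by (simp add: e3)
    have v1: "Inr (e,w) \<in> verts H" "Inr (e,0) \<in> verts H" using a n2 by (simp_all add: inr_in)
    have "gdist H (Inr (e,w)) (Inr (e,0)) \<le> 1" by (rule gd_adj[OF adj _ v1]) (use a in simp)
    then have le1: "gdist_set H (Inr (e,w)) (color_class H c j) \<le> 1"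
      using order_trans[OF gs_le[OF z0]] by blast
    have ge2: "2 \<le> gdist_set H (Inr (e',w)) (color_class H c j)"
    proof (rule gs_ge)
      fix z assume z: "z \<in> color_class H c j"
      then have zv: "z \<in> verts H" "c z = j" by (auto simp: color_class_def)
      have "z = Inr (e,0)"
      proof (rule vHc[OF zv(1)])
        fix v assume "z = Inl v" "v \<in> verts G"
        then show ?thesis using zv(2) gv[of v] n2 by (auto simp: j_def)
      next
        fix e'' w'' assume z'': "z = Inr (e'',w'')" "e'' \<in> edges G" "w'' < n"
        show ?thesis
        proof (cases "w'' = 0 \<and> 1 \<le> f e''")
          case True
          then have "f e'' = f e" using zv z'' by (simp add: j_def)
          then have "e'' = e" using inj_onD[OF finj _ z''(2) a(1)] by blast
          then show ?thesis using z'' True by simp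
        next
          case False
          then show ?thesis using zv z'' a by (auto simp: j_def)
        qed
      qed
      then show "2 \<le> gdist H (Inr (e',w)) z"
        using a by (intro gd_ge2) (auto simp: e3)
    qed
    have "gdist_set H (Inr (e,w)) (color_class H c j) = gdist_set H (Inr (e',w)) (color_class H c j)"
      using eq j unfolding code_eq by blast
    then have "(2::enat) \<le> 1" using le1 ge2 by (metis order_trans)
    then show False by (simp add: one_enat_def numeral_eq_enat)
  qed

lemma loc: "locating_rainbow_coloring H K c"
  unfolding locating_rainbow_coloring_def
proof (intro conjI rb inj_onI)
  fix x y assume x: "x \<in> verts H" and y: "y \<in> verts H"
    and eq: "rainbow_code H K c x = rainbow_code H K c y"
  have cxy: "c y = c x" using code_eq_color[OF eq range[OF x] x y] .
  show "x = y"
  proof (rule vHc[OF x])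
    fix a assume xa: "x = Inl a" "a \<in> verts G"
    show "x = y"
    proof (rule vHc[OF y])
      fix b assume yb: "y = Inl b" "b \<in> verts G"
      then have "g a = g b" using cxy xa by simp
      then have "a = b" using inj_onD[OF ginj _ xa(2) yb(2)] by blast
      then show ?thesis using xa yb by simp
    next
      fix e w assume yr: "y = Inr (e,w)" "e \<in> edges G" "w < n"
      have "g a < m" using gv[OF xa(2)] .
      then show ?thesis using cxy xa yr by (auto split: if_splits)
    qed
  next
    fix e w assume rr1: "x = Inr (e,w)" "e \<in> edges G" "w < n"
    show "x = y"
    proof (rule vHc[OF y])
      fix b assume yb: "y = Inl b" "b \<in> verts G"
      have "g b < m" using gv[OF yb(2)] .
      then show ?thesis using cxy yb rr1 by (auto split: if_splits)
    next
      fix e' w' assume rr2: "y = Inr (e',w')" "e' \<in> edges G" "w' < n"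
      show ?thesis
      proof (cases "w = 0 \<and> 1 \<le> f e")
        case True
        note T1 = True
        have cx: "c x = m + n + f e" using T1 rr1 by simp
        show ?thesis
        proof (cases "w' = 0 \<and> 1 \<le> f e'")
          case True
          then have "c y = m + n + f e'" using rr2 by simp
          then have "f e' = f e" using cx cxy by simp
          then have "e' = e" using inj_onD[OF finj _ rr2(2) rr1(2)] by blast
          then show ?thesis using rr1 rr2 T1 True by simp
        next
          case False
          then have "c y = m + w' + 1" using rr2 by simp
          then show ?thesis using cx cxy rr2 T1 by auto
        qed
      next
        case False
        note F1 = False
        have cx: "c x = m + w + 1" using F1 rr1 by simp
        show ?thesis
        proof (cases "w' = 0 \<and> 1 \<le> f e'")
          case True
          then have "c y = m + n + f e'" using rr2 by simp
          then show ?thesis using cx cxy rr1 True by auto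
        next
          case False
          then have "c y = m + w' + 1" using rr2 by simp
          then have ww: "w' = w" using cx cxy by simp
          show ?thesis
          proof (rule ccontr)
            assume "x \<noteq> y"
            then have ne: "e \<noteq> e'" using rr1 rr2 ww by auto
            have "w \<noteq> 0"
            proof
              assume "w = 0"
              then have "f e = 0" "f e' = 0" using F1 False ww by auto
              then have "e = e'" using inj_onD[OF finj _ rr1(2) rr2(2)] by simp
              then show False using ne by simp
            qed
            then have w1: "1 \<le> w" by simp
            show False
            proof (cases "1 \<le> f e")
              case True
              then show ?thesis using sep[OF rr1(2) rr2(2) ne w1 rr1(3) True] eq rr1 rr2 ww by simp
            next
              case False
              have "f e \<noteq> f e'" using ne inj_onD[OF finj _ rr1(2) rr2(2)] by blast
              then have fe1: "1 \<le> f e'" using False by simp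
              show ?thesis using sep[OF rr2(2) rr1(2) ne[symmetric] w1 rr1(3) fe1] eq rr1 rr2 ww by simp
            qed
          qed
        qed
      qed
    qed
  qed
qed

end

lemma upper:
  fixes G :: "'a graph"
  assumes n2: "n \<ge> 2" and G: "simple_graph G" and conn: "connected_graph G" and cardV: "card (verts G) = m"
    and e0: "e0 \<in> edges G"
  shows "\<exists>c. locating_rainbow_coloring (edge_corona G (complete_graph n)) (m + n + card (edges G) - 1) c"
proof -
  have finV: "finite (verts G)" using G by (simp add: simple_graph_def)
  have esub: "\<And>e. e \<in> edges G \<Longrightarrow> e \<subseteq> verts G" using G by (simp add: simple_graph_def)
  have finE: "finite (edges G)"
    by (rule finite_subset[of _ "Pow (verts G)"]) (use esub finV in auto)
  obtain g where g: "bij_betw g (verts G) {0..<m}" using ex_bij_betw_finite_nat[OF finV] cardV by auto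
  obtain f where f: "bij_betw f (edges G) {0..<card (edges G)}" using ex_bij_betw_finite_nat[OF finE] by auto
  have "corona G n m g f e0" unfolding corona_def using assms g f by blast
  then interpret corona G n m g f e0 .
  show ?thesis using loc unfolding K_def by blast
qed


theorem theorem3:
  fixes G :: "'a graph" and m n :: nat
  assumes "m \<ge> 2" and "n \<ge> 2"
    and "simple_graph G" and "connected_graph G" and "card (verts G) = m"
  shows "max (rvc G) (n + 1) \<le> rvcl (edge_corona G (complete_graph n)) \<and>
         rvcl (edge_corona G (complete_graph n)) \<le> m + n + card (edges G) - 1"
proof -
  let ?H = "edge_corona G (complete_graph n)"
  have finV: "finite (verts G)" using assms(3) by (simp add: simple_graph_def)
  obtain u v where uv: "u \<in> verts G" "v \<in> verts G" "u \<noteq> v"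
    using assms(1,5) finV card_le_Suc0_iff_eq[OF finV] by (metis One_nat_def not_less_eq_eq numeral_2_eq_2)
  obtain p where p: "is_path G p" "hd p = u" "last p = v"
    using assms(4) uv by (auto simp: connected_graph_def)
  have "length p \<noteq> 0" using p by (simp add: is_path_def)
  moreover have "length p \<noteq> 1" using p uv by (cases p) auto
  ultimately have "Suc 0 < length p" by linarith
  then have e0: "{p ! 0, p ! Suc 0} \<in> edges G" using p by (simp add: is_path_def)
  have "card {p ! 0, p ! Suc 0} = 2" "{p ! 0, p ! Suc 0} \<subseteq> verts G"
    using e0 assms(3) unfolding simple_graph_def by blast+
  then have a: "p ! 0 \<in> {p ! 0, p ! Suc 0}" "p ! 0 \<in> verts G" by auto
  have ex: "\<exists>c. locating_rainbow_coloring ?H (m + n + card (edges G) - 1) c"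
    using upper[OF assms(2,3,4,5) e0] .
  then have up: "rvcl ?H \<le> m + n + card (edges G) - 1"
    unfolding rvcl_def by (rule Least_le[where P = "\<lambda>k. \<exists>c. locating_rainbow_coloring ?H k c"])
  obtain c0 where c0: "locating_rainbow_coloring ?H (rvcl ?H) c0"
    using LeastI_ex[where P = "\<lambda>k. \<exists>c. locating_rainbow_coloring ?H k c"] ex unfolding rvcl_def by blast
  have "rvc G \<le> rvcl ?H" using lower_rvc[OF assms(3) c0] .
  moreover have "n + 1 \<le> rvcl ?H" using lower_n[OF e0 a c0] .
  ultimately show ?thesis using up by simp
qed


end
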